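(* Let $p \geq 1$ and $a \geq 0$ be integers, and let $a_{\max}(p) = \lfloor \frac{p^2}{4} \rfloor$. Then: (i) If $a < p-1$, then $H_c(p,a) = 0$. (ii) If $a > a_{\max}(p)$, then $H(p,a) = 0$. Moreover, $$H(p, a_{\max}(p)) = \begin{cases} p, & \text{if } p \text{ is odd},\\ \frac{p}{2}, & \text{if } p \text{ is even}.\end{cases}$$ (iii) If $a_{\max}(p-1) < a \leq a_{\max}(p)$, then $H(p,a) = H_c(p,a)$.
   Context: For a finite poset, the Hasse diagram is the directed graph on its points whose arcs are the covering pairs $x \to y$ ($x < y$ with no $w$ satisfying $x < w < y$). Posets are counted up to isomorphism (unlabeled). $H(p,a)$ denotes the number of isomorphism classes of posets with $p$ points whose Hasse diagram has exactly $a$ arcs, and $H_c(p,a)$ denotes the number of those that are connected (i.e., whose Hasse diagram, viewed as an undirected graph, is connected). *)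

theory Defs
  imports Main
begin

definition is_poset :: "nat \<Rightarrow> (nat \<times> nat) set \<Rightarrow> bool" where
  "is_poset p R \<longleftrightarrow> R \<subseteq> {..<p} \<times> {..<p}
     \<and> (\<forall>x\<in>{..<p}. (x, x) \<in> R)
     \<and> (\<forall>x y. (x, y) \<in> R \<and> (y, x) \<in> R \<longrightarrow> x = y)
     \<and> (\<forall>x y z. (x, y) \<in> R \<and> (y, z) \<in> R \<longrightarrow> (x, z) \<in> R)"

definition hasse_arcs :: "(nat \<times> nat) set \<Rightarrow> (nat \<times> nat) set" where
  "hasse_arcs R = {(x, y). (x, y) \<in> R \<and> x \<noteq> y \<and>
      \<not> (\<exists>w. (x, w) \<in> R \<and> x \<noteq> w \<and> (w, y) \<in> R \<and> w \<noteq> y)}"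

definition hasse_connected :: "nat \<Rightarrow> (nat \<times> nat) set \<Rightarrow> bool" where
  "hasse_connected p R \<longleftrightarrow>
     (\<forall>x\<in>{..<p}. \<forall>y\<in>{..<p}. (x, y) \<in> (hasse_arcs R \<union> (hasse_arcs R)\<inverse>)\<^sup>*)"

definition poset_iso :: "nat \<Rightarrow> (nat \<times> nat) set \<Rightarrow> (nat \<times> nat) set \<Rightarrow> bool" where
  "poset_iso p R S \<longleftrightarrow> (\<exists>f. bij_betw f {..<p} {..<p} \<and>
     (\<forall>x\<in>{..<p}. \<forall>y\<in>{..<p}. (x, y) \<in> R \<longleftrightarrow> (f x, f y) \<in> S))"

definition num_iso_classes :: "nat \<Rightarrow> (nat \<times> nat) set set \<Rightarrow> nat" where
  "num_iso_classes p A = card (A // {(R, S). R \<in> A \<and> S \<in> A \<and> poset_iso p R S})"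

definition H :: "nat \<Rightarrow> nat \<Rightarrow> nat" where
  "H p a = num_iso_classes p {R. is_poset p R \<and> card (hasse_arcs R) = a}"

definition Hc :: "nat \<Rightarrow> nat \<Rightarrow> nat" where
  "Hc p a = num_iso_classes p
     {R. is_poset p R \<and> card (hasse_arcs R) = a \<and> hasse_connected p R}"

definition a_max :: "nat \<Rightarrow> nat" where
  "a_max p = p\<^sup>2 div 4"

end

theory Submission
  imports Defs
begin

lemma po_sub: "is_poset p R \<Longrightarrow> R \<subseteq> {..<p} \<times> {..<p}" by (simp add: is_poset_def)
lemma po_refl: "is_poset p R \<Longrightarrow> x < p \<Longrightarrow> (x,x) \<in> R" by (simp add: is_poset_def)
lemma po_antisym: "is_poset p R \<Longrightarrow> (x,y) \<in> R \<Longrightarrow> (y,x) \<in> R \<Longrightarrow> x = y"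
  unfolding is_poset_def by blast
lemma po_trans: "is_poset p R \<Longrightarrow> (x,y) \<in> R \<Longrightarrow> (y,z) \<in> R \<Longrightarrow> (x,z) \<in> R"
  unfolding is_poset_def by blast
lemma po_fin: "is_poset p R \<Longrightarrow> finite R"
  using po_sub finite_subset by blast

lemma hasse_R: "(x,y) \<in> hasse_arcs R \<Longrightarrow> (x,y) \<in> R \<and> x \<noteq> y"
  by (simp add: hasse_arcs_def)
lemma hasse_sub: "is_poset p R \<Longrightarrow> hasse_arcs R \<subseteq> {..<p} \<times> {..<p}"
  using po_sub hasse_R by fastforce
lemma hasse_fin: "is_poset p R \<Longrightarrow> finite (hasse_arcs R)"
  using hasse_sub finite_subset by blast

lemma hasse_notbetween: "(x,y) \<in> hasse_arcs R \<Longrightarrow> (x,w) \<in> R \<Longrightarrow> x \<noteq> w \<Longrightarrow> (w,y) \<in> R \<Longrightarrow> w \<noteq> y \<Longrightarrow> False"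
  by (auto simp add: hasse_arcs_def)

lemma po_converse: "is_poset p R \<Longrightarrow> is_poset p (R\<inverse>)"
  unfolding is_poset_def by blast
lemma hasse_converse: "hasse_arcs (R\<inverse>) = (hasse_arcs R)\<inverse>"
  unfolding hasse_arcs_def by blast

lemma cover_up_aux:
  assumes po: "is_poset p R"
  shows "card {w. (x,w) \<in> R \<and> x \<noteq> w \<and> (w,y) \<in> R \<and> w \<noteq> y} = n \<Longrightarrow> (x,y) \<in> R \<Longrightarrow> x \<noteq> y
     \<Longrightarrow> \<exists>z. (x,z) \<in> hasse_arcs R \<and> (z,y) \<in> R"
proof (induction n arbitrary: y rule: less_induct)
  case (less n)
  show ?case
  proof (cases "(x,y) \<in> hasse_arcs R")
    case True
    then show ?thesis using po_refl[OF po] po_sub[OF po] less.prems by blast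
  next
    case False
    then obtain w where w: "(x,w) \<in> R" "x \<noteq> w" "(w,y) \<in> R" "w \<noteq> y"
      using less.prems by (auto simp add: hasse_arcs_def)
    let ?I = "\<lambda>y. {w. (x,w) \<in> R \<and> x \<noteq> w \<and> (w,y) \<in> R \<and> w \<noteq> y}"
    have fin: "finite (?I y)"
      by (rule finite_subset[of _ "{..<p}"]) (use po_sub[OF po] in auto)
    have sub: "?I w \<subset> ?I y"
    proof
      show "?I w \<subseteq> ?I y"
      proof
        fix u assume "u \<in> ?I w"
        then have u: "(x,u) \<in> R" "x \<noteq> u" "(u,w) \<in> R" "u \<noteq> w" by auto
        have "(u,y) \<in> R" using po_trans[OF po u(3) w(3)] .
        moreover have "u \<noteq> y" using po_antisym[OF po u(3)] w(3) u(4) by blast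
        ultimately show "u \<in> ?I y" using u by auto
      qed
      show "?I w \<noteq> ?I y" using w by auto
    qed
    have "card (?I w) < n" using psubset_card_mono[OF fin sub] less.prems by simp
    from less.IH[OF this refl w(1) w(2)] obtain z where "(x,z) \<in> hasse_arcs R" "(z,w) \<in> R" by blast
    then show ?thesis using po_trans[OF po _ w(3)] by blast
  qed
qed

lemma cover_up:
  assumes "is_poset p R" "(x,y) \<in> R" "x \<noteq> y"
  shows "\<exists>z. (x,z) \<in> hasse_arcs R \<and> (z,y) \<in> R"
  using cover_up_aux[OF assms(1) refl assms(2,3)] .

lemma cover_down:
  assumes "is_poset p R" "(x,y) \<in> R" "x \<noteq> y"
  shows "\<exists>z. (x,z) \<in> R \<and> (z,y) \<in> hasse_arcs R"
proof -
  have "\<exists>z. (y,z) \<in> hasse_arcs (R\<inverse>) \<and> (z,x) \<in> R\<inverse>"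
    using cover_up[OF po_converse[OF assms(1)]] assms(2,3) by auto
  then show ?thesis by (auto simp add: hasse_converse)
qed

definition edges :: "(nat \<times> nat) set \<Rightarrow> (nat \<times> nat) set" where
  "edges R = hasse_arcs R \<union> (hasse_arcs R)\<inverse>"

lemma card_edges:
  assumes po: "is_poset p R"
  shows "card (edges R) = 2 * card (hasse_arcs R)"
proof -
  have d: "hasse_arcs R \<inter> (hasse_arcs R)\<inverse> = {}"
    using po_antisym[OF po] hasse_R by blast
  have c: "card ((hasse_arcs R)\<inverse>) = card (hasse_arcs R)"
  proof -
    have "(hasse_arcs R)\<inverse> = prod.swap ` hasse_arcs R" by auto
    moreover have "inj_on prod.swap (hasse_arcs R)" by (metis inj_on_def swap_swap)
    ultimately show ?thesis by (simp add: card_image)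
  qed
  show ?thesis unfolding edges_def
    using card_Un_disjoint[OF hasse_fin[OF po] _ d] hasse_fin[OF po] c by simp
qed

lemma edges_sub: "is_poset p R \<Longrightarrow> edges R \<subseteq> {..<p} \<times> {..<p}"
  unfolding edges_def using hasse_sub by fastforce
lemma edges_sym: "sym (edges R)"
  unfolding edges_def sym_def by blast
lemma edges_irrefl: "(x,x) \<notin> edges R"
  unfolding edges_def using hasse_R by blast

lemma edges_trifree:
  assumes po: "is_poset p R"
  shows "(x,y) \<in> edges R \<Longrightarrow> (y,z) \<in> edges R \<Longrightarrow> (x,z) \<in> edges R \<Longrightarrow> False"
proof -
  have ch: "False" if "(a,b) \<in> hasse_arcs R" "(b,c) \<in> hasse_arcs R" "(a,c) \<in> hasse_arcs R \<or> (c,a) \<in> hasse_arcs R" for a b c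
  proof -
    have ab: "(a,b) \<in> R" "a \<noteq> b" and bc: "(b,c) \<in> R" "b \<noteq> c" using that hasse_R by auto
    have ac: "(a,c) \<in> R" using po_trans[OF po ab(1) bc(1)] .
    show False using that(3)
    proof
      assume "(a,c) \<in> hasse_arcs R"
      then show False using hasse_notbetween ab bc by blast
    next
      assume "(c,a) \<in> hasse_arcs R"
      then have "(c,a) \<in> R" "c \<noteq> a" using hasse_R by auto
      then show False using po_antisym[OF po ac] by blast
    qed
  qed
  assume "(x,y) \<in> edges R" "(y,z) \<in> edges R" "(x,z) \<in> edges R"
  then show False unfolding edges_def using ch by blast
qed


lemma amax_prod: "(D::nat) \<le> n \<Longrightarrow> (n - D) * D \<le> a_max n"
proof -
  assume "D \<le> n"
  then obtain j where j: "n = D + j" using le_Suc_ex by blast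
  have "4 * (j * D) \<le> (D + j)^2"
  proof -
    have "int (4 * (j * D)) \<le> int ((D + j)^2)"
    proof -
      have "0 \<le> (int D - int j)^2" by simp
      then show ?thesis by (simp add: power2_eq_square algebra_simps)
    qed
    then show ?thesis by linarith
  qed
  then have "(4 * (j * D)) div 4 \<le> (D + j)^2 div 4" by (rule div_le_mono)
  then show ?thesis unfolding a_max_def using j by simp
qed

lemma mantel:
  fixes U :: "nat set" and E :: "(nat \<times> nat) set"
  assumes fin: "finite U" and sub: "E \<subseteq> U \<times> U" and sy: "sym E" and irr: "\<forall>x. (x,x) \<notin> E"
    and tri: "\<forall>x y z. (x,y) \<in> E \<longrightarrow> (y,z) \<in> E \<longrightarrow> (x,z) \<in> E \<longrightarrow> False"
  shows "card E \<le> 2 * a_max (card U) \<and> (card E = 2 * a_max (card U) \<longrightarrow>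
           (\<exists>P Q. P \<inter> Q = {} \<and> P \<union> Q = U \<and> E = P \<times> Q \<union> Q \<times> P))"
proof (cases "U = {}")
  case True
  then have "E = {}" using sub by auto
  then show ?thesis using True by auto
next
  case False
  define N where "N x = {y. (x,y) \<in> E}" for x
  define d where "d x = card (N x)" for x
  have NU: "N x \<subseteq> U" for x using sub unfolding N_def by auto
  have finN: "finite (N x)" for x using finite_subset[OF NU fin] .
  have symE: "(x,y) \<in> E \<Longrightarrow> (y,x) \<in> E" for x y using sy unfolding sym_def by blast
  have cardE: "card E = (\<Sum>x\<in>U. d x)"
  proof -
    have "E = Sigma U N" using sub unfolding N_def by auto
    then show ?thesis unfolding d_def using fin finN by simp
  qed
  have "Max (d ` U) \<in> d ` U" using False fin by (intro Max_in) auto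
  then obtain v where v: "v \<in> U" "d v = Max (d ` U)" by auto
  have dmax: "d x \<le> d v" if "x \<in> U" for x using v fin that by simp
  define Nv where "Nv = N v"
  define W where "W = U - Nv"
  define D where "D = d v"
  have NvU: "Nv \<subseteq> U" using NU Nv_def by simp
  have cardNv: "card Nv = D" unfolding Nv_def D_def d_def ..
  have cardW: "card W = card U - D" unfolding W_def using card_Diff_subset[OF finite_subset[OF NvU fin] NvU] cardNv by simp
  have finW: "finite W" unfolding W_def using fin by simp
  have indep: "x \<in> Nv \<Longrightarrow> y \<in> Nv \<Longrightarrow> (x,y) \<notin> E" for x y
    using tri unfolding Nv_def N_def by blast
  have NxW: "x \<in> Nv \<Longrightarrow> N x \<subseteq> W" for x
    unfolding W_def using NU indep unfolding N_def by blast
  have split: "(\<Sum>x\<in>U. d x) = (\<Sum>x\<in>W. d x) + (\<Sum>x\<in>Nv. d x)"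
    unfolding W_def using sum.subset_diff[OF NvU fin] .
  define c where "c w = card (N w \<inter> Nv)" for w
  have SN: "(\<Sum>x\<in>Nv. d x) = (\<Sum>w\<in>W. c w)"
  proof -
    have "(\<Sum>x\<in>Nv. d x) = card (Sigma Nv N)" unfolding d_def
      using finite_subset[OF NvU fin] finN by simp
    also have "Sigma Nv N = prod.swap ` (Sigma W (\<lambda>w. N w \<inter> Nv))"
    proof
      show "Sigma Nv N \<subseteq> prod.swap ` (Sigma W (\<lambda>w. N w \<inter> Nv))"
      proof
        fix z assume "z \<in> Sigma Nv N"
        then obtain x y where z: "z = (x,y)" "x \<in> Nv" "y \<in> N x" by auto
        have "y \<in> W" using NxW z by auto
        moreover have "x \<in> N y" using z symE unfolding N_def by auto
        ultimately have "(y,x) \<in> Sigma W (\<lambda>w. N w \<inter> Nv)" using z by auto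
        then show "z \<in> prod.swap ` (Sigma W (\<lambda>w. N w \<inter> Nv))" using z by force
      qed
      show "prod.swap ` (Sigma W (\<lambda>w. N w \<inter> Nv)) \<subseteq> Sigma Nv N"
        using symE unfolding N_def by auto
    qed
    also have "card (prod.swap ` (Sigma W (\<lambda>w. N w \<inter> Nv))) = card (Sigma W (\<lambda>w. N w \<inter> Nv))"
      by (rule card_image) (metis inj_on_def swap_swap)
    also have "\<dots> = (\<Sum>w\<in>W. c w)" unfolding c_def using finW finN by simp
    finally show ?thesis .
  qed
  have cd: "w \<in> W \<Longrightarrow> c w \<le> d w" for w unfolding c_def d_def using finN by (simp add: card_mono)
  have dD: "w \<in> W \<Longrightarrow> d w \<le> D" for w unfolding D_def using dmax W_def by auto
  have sW: "(\<Sum>w\<in>W. d w) \<le> card W * D" using sum_mono[of W d "\<lambda>_. D"] dD by simp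
  have sN: "(\<Sum>w\<in>W. c w) \<le> card W * D" using sum_mono[of W c "\<lambda>_. D"] dD cd by fastforce
  have bound: "card E \<le> 2 * (card W * D)" using cardE split SN sW sN by linarith
  have am: "card W * D \<le> a_max (card U)"
    using amax_prod[of D "card U"] cardW cardNv card_mono[OF fin NvU] by simp
  have part1: "card E \<le> 2 * a_max (card U)" using bound am by linarith
  have part2: "\<exists>P Q. P \<inter> Q = {} \<and> P \<union> Q = U \<and> E = P \<times> Q \<union> Q \<times> P"
    if eq: "card E = 2 * a_max (card U)"
  proof -
    have eW: "(\<Sum>w\<in>W. c w) = card W * D" using cardE split SN sW sN bound am eq by linarith
    have eW2: "(\<Sum>w\<in>W. d w) = card W * D" using cardE split SN sW sN bound am eq by linarith
    have cw: "c w = D" if w: "w \<in> W" for w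
    proof (rule ccontr)
      assume "c w \<noteq> D"
      then have "c w < D" using cd dD w by force
      then have "(\<Sum>w\<in>W. c w) < (\<Sum>w\<in>W. D)"
        using sum_strict_mono_ex1[OF finW, of c "\<lambda>_. D"] cd dD w by fastforce
      then show False using eW by simp
    qed
    have dw: "d w = D" if w: "w \<in> W" for w using cw[OF w] cd[OF w] dD[OF w] by simp
    have NwNv: "N w = Nv" if w: "w \<in> W" for w
    proof -
      have "N w \<inter> Nv = Nv"
        using card_subset_eq[OF finite_subset[OF NvU fin], of "N w \<inter> Nv"] cw[OF w] cardNv unfolding c_def by auto
      then have s: "Nv \<subseteq> N w" by auto
      show ?thesis using card_subset_eq[OF finN s] dw[OF w] cardNv unfolding d_def by simp
    qed
    show ?thesis
    proof (intro exI conjI)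
      show "W \<inter> Nv = {}" "W \<union> Nv = U" unfolding W_def using NvU by auto
      show "E = W \<times> Nv \<union> Nv \<times> W"
      proof
        show "E \<subseteq> W \<times> Nv \<union> Nv \<times> W"
        proof
          fix z assume z: "z \<in> E"
          then obtain x y where xy: "z = (x,y)" "x \<in> U" "y \<in> U" using sub by auto
          show "z \<in> W \<times> Nv \<union> Nv \<times> W"
          proof (cases "x \<in> W")
            case True
            then have "y \<in> Nv" using NwNv[OF True] z xy unfolding N_def by auto
            then show ?thesis using True xy by auto
          next
            case False
            then have "x \<in> Nv" using xy W_def by auto
            then have "y \<in> W" using NxW z xy unfolding N_def by auto
            then show ?thesis using \<open>x \<in> Nv\<close> xy by auto
          qed
        qed
        show "W \<times> Nv \<union> Nv \<times> W \<subseteq> E"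
          using NwNv symE unfolding N_def by auto
      qed
    qed
  qed
  show ?thesis using part1 part2 by blast
qed


lemma conn_arcs:
  assumes po: "is_poset p R" and con: "hasse_connected p R" and p1: "p \<ge> 1"
  shows "p - 1 \<le> card (hasse_arcs R)"
proof -
  define A where "A = hasse_arcs R"
  define E where "E = A \<union> A\<inverse>"
  have reach: "\<exists>n. (v,0) \<in> E ^^ n" if "v < p" for v
  proof -
    have "(v,0) \<in> E\<^sup>*" using con that p1 unfolding hasse_connected_def E_def A_def by auto
    then show ?thesis using rtrancl_power by blast
  qed
  define d where "d v = (LEAST n. (v,0) \<in> E ^^ n)" for v
  have dI: "(v,0) \<in> E ^^ d v" if "v < p" for v
    using reach[OF that] unfolding d_def by (metis LeastI)
  have dle: "(v,0) \<in> E ^^ n \<Longrightarrow> d v \<le> n" for v n unfolding d_def by (rule Least_le)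
  have step: "\<exists>u. (v,u) \<in> E \<and> Suc (d u) = d v" if v: "v < p" "v \<noteq> 0" for v
  proof -
    have pv: "(v,0) \<in> E ^^ d v" using dI[OF v(1)] .
    have "d v \<noteq> 0" using pv v(2) by (cases "d v") auto
    then obtain n where n: "d v = Suc n" by (cases "d v") auto
    then obtain u where u: "(v,u) \<in> E" "(u,0) \<in> E ^^ n" using pv by (metis relpow_Suc_D2)
    have "d u \<le> n" using dle[OF u(2)] .
    moreover have "d v \<le> Suc (d u)"
    proof -
      have "u < p" using u(1) hasse_sub[OF po] unfolding E_def A_def by auto
      then have "(u,0) \<in> E ^^ d u" using dI by blast
      then have "(v,0) \<in> E ^^ Suc (d u)" using u(1) by (metis relpow_Suc_I2)
      then show ?thesis using dle by blast
    qed
    ultimately show ?thesis using u n by (intro exI[of _ u]) auto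
  qed
  define u where "u v = (SOME u. (v,u) \<in> E \<and> Suc (d u) = d v)" for v
  have uP: "(v,u v) \<in> E \<and> Suc (d (u v)) = d v" if "v < p" "v \<noteq> 0" for v
    unfolding u_def using someI_ex[OF step[OF that]] .
  define g where "g v = (if (v, u v) \<in> A then (v, u v) else (u v, v))" for v
  have gA: "g ` ({..<p} - {0}) \<subseteq> A"
    using uP unfolding g_def E_def by auto
  have ginj: "inj_on g ({..<p} - {0})"
  proof (rule inj_onI)
    fix x y assume x: "x \<in> {..<p} - {0}" and y: "y \<in> {..<p} - {0}" and e: "g x = g y"
    have ux: "Suc (d (u x)) = d x" and uy: "Suc (d (u y)) = d y" using uP x y by auto
    show "x = y" using e ux uy unfolding g_def by (auto split: if_splits)
  qed
  have "card ({..<p} - {0}) \<le> card A"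
    using card_inj_on_le[OF ginj gA] hasse_fin[OF po] unfolding A_def by simp
  then show ?thesis using p1 unfolding A_def by simp
qed


lemma amax_1: "a_max 1 = 0" by (simp add: a_max_def)

lemma amax_mono: "k \<le> l \<Longrightarrow> a_max k \<le> a_max l"
  unfolding a_max_def by (intro div_le_mono power_mono) auto

lemma amax_sup: assumes "k \<ge> 1" "l \<ge> 1" shows "a_max k + a_max l \<le> a_max (k + l - 1)"
proof (cases "k = 1 \<or> l = 1")
  case True
  then show ?thesis using amax_1 by auto
next
  case False
  then obtain i j where ij: "k = Suc i" "l = Suc j" "i \<ge> 1" "j \<ge> 1" using assms
    by (metis One_nat_def Suc_le_D le_SucE less_eq_Suc_le not_less_eq_eq)
  have ij1: "1 \<le> i * j" using ij(3,4) by (simp add: one_le_mult_iff)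
  have sq: "k^2 + l^2 \<le> (k + l - 1)^2"
  proof -
    have "(k + l - 1) = i + j + 1" using ij by simp
    then have "(k + l - 1)^2 = i*i + j*j + 2*(i*j) + 2*i + 2*j + 1"
      by (simp add: power2_eq_square algebra_simps)
    moreover have "k^2 + l^2 = i*i + j*j + 2*i + 2*j + 2"
      using ij by (simp add: power2_eq_square algebra_simps)
    ultimately show ?thesis using ij1 by linarith
  qed
  have "4 * (a_max k + a_max l) \<le> k^2 + l^2"
    unfolding a_max_def by (metis add_mono distrib_left mult.commute div_times_less_eq_dividend)
  then have "4 * (a_max k + a_max l) \<le> (k + l - 1)^2" using sq by linarith
  then have "(4 * (a_max k + a_max l)) div 4 \<le> (k + l - 1)^2 div 4" by (rule div_le_mono)
  then show ?thesis unfolding a_max_def by simp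
qed

lemma disc_bound:
  assumes po: "is_poset p R" and nc: "\<not> hasse_connected p R"
  shows "card (hasse_arcs R) \<le> a_max (p - 1)"
proof -
  define E where "E = edges R"
  obtain x y where xy: "x < p" "y < p" "(x,y) \<notin> E\<^sup>*"
    using nc unfolding hasse_connected_def E_def edges_def by auto
  define C where "C = {z. z < p \<and> (x,z) \<in> E\<^sup>*}"
  define D where "D = {..<p} - C"
  have Esub: "E \<subseteq> {..<p} \<times> {..<p}" using edges_sub[OF po] E_def by simp
  have closed: "z \<in> C \<Longrightarrow> (z,w) \<in> E \<Longrightarrow> w \<in> C" for z w
    using Esub unfolding C_def by (auto intro: rtrancl_into_rtrancl)
  have symE: "(a,b) \<in> E \<Longrightarrow> (b,a) \<in> E" for a b using edges_sym[of R] unfolding E_def sym_def by blast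
  have xC: "x \<in> C" using xy unfolding C_def by auto
  have yD: "y \<in> D" using xy unfolding D_def C_def by auto
  have CD: "C \<union> D = {..<p}" "C \<inter> D = {}" unfolding C_def D_def by auto
  have finC: "finite C" and finD: "finite D" unfolding C_def D_def by auto
  have cardCD: "card C + card D = p" using card_Un_disjoint[OF finC finD CD(2)] CD(1) by simp
  have Esplit: "E = (E \<inter> C \<times> C) \<union> (E \<inter> D \<times> D)"
  proof -
    have "(a,b) \<in> E \<Longrightarrow> a \<in> C \<longleftrightarrow> b \<in> C" for a b using closed symE by blast
    then show ?thesis using Esub CD by auto
  qed
  have disj: "(E \<inter> C \<times> C) \<inter> (E \<inter> D \<times> D) = {}" using CD by auto
  have mt: "card (E \<inter> S \<times> S) \<le> 2 * a_max (card S)" if "finite S" for S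
  proof -
    have "E \<inter> S \<times> S \<subseteq> S \<times> S" by blast
    moreover have "sym (E \<inter> S \<times> S)" using symE unfolding sym_def by blast
    moreover have "\<forall>z. (z,z) \<notin> E \<inter> S \<times> S" using edges_irrefl[of _ R] unfolding E_def by blast
    moreover have "\<forall>a b c. (a,b) \<in> E \<inter> S \<times> S \<longrightarrow> (b,c) \<in> E \<inter> S \<times> S \<longrightarrow> (a,c) \<in> E \<inter> S \<times> S \<longrightarrow> False"
      using edges_trifree[OF po] unfolding E_def by blast
    ultimately show ?thesis using mantel[OF that] by blast
  qed
  have "card E = card (E \<inter> C \<times> C) + card (E \<inter> D \<times> D)"
    using card_Un_disjoint[OF _ _ disj] finC finD Esplit by (metis finite_Int finite_SigmaI Int_commute)
  also have "\<dots> \<le> 2 * a_max (card C) + 2 * a_max (card D)" using mt finC finD add_mono by blast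
  also have "\<dots> \<le> 2 * a_max (p - 1)"
  proof -
    have "card C \<ge> 1" using xC finC card_0_eq by fastforce
    moreover have "card D \<ge> 1" using yD finD card_0_eq by fastforce
    ultimately show ?thesis using amax_sup[of "card C" "card D"] cardCD by simp
  qed
  finally show ?thesis using card_edges[OF po] E_def by simp
qed


definition WO :: "nat \<Rightarrow> (nat \<Rightarrow> nat) \<Rightarrow> (nat \<times> nat) set" where
  "WO p lev = {(x,y). x < p \<and> y < p \<and> (x = y \<or> lev x < lev y)}"
definition lvl :: "nat \<Rightarrow> (nat \<Rightarrow> nat) \<Rightarrow> nat \<Rightarrow> nat set" where
  "lvl p lev k = {x. x < p \<and> lev x = k}"
definition minset :: "nat \<Rightarrow> (nat \<times> nat) set \<Rightarrow> nat set" where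
  "minset p R = {x. x < p \<and> (\<forall>y. (y,x) \<in> R \<longrightarrow> y = x)}"
definition maxset :: "nat \<Rightarrow> (nat \<times> nat) set \<Rightarrow> nat set" where
  "maxset p R = {x. x < p \<and> (\<forall>y. (x,y) \<in> R \<longrightarrow> y = x)}"
definition arcsf :: "nat \<Rightarrow> nat \<Rightarrow> nat \<Rightarrow> nat" where
  "arcsf c0 c1 c2 = (if c1 = 0 then c0 * c2 else c0 * c1 + c1 * c2)"

lemma WO_poset: "is_poset p (WO p lev)"
  unfolding is_poset_def WO_def by auto

lemma WO_hasse:
  assumes le2: "\<forall>x<p. lev x \<le> 2"
  shows "hasse_arcs (WO p lev) = (if lvl p lev 1 = {} then lvl p lev 0 \<times> lvl p lev 2
            else lvl p lev 0 \<times> lvl p lev 1 \<union> lvl p lev 1 \<times> lvl p lev 2)"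
proof -
  have h1: "(x,y) \<in> hasse_arcs (WO p lev) \<longleftrightarrow> x < p \<and> y < p \<and> lev x < lev y \<and>
          \<not> (\<exists>w. w < p \<and> lev x < lev w \<and> lev w < lev y)" for x y
    unfolding hasse_arcs_def WO_def by auto
  moreover have h2: "(x < p \<and> y < p \<and> lev x < lev y \<and> \<not> (\<exists>w. w < p \<and> lev x < lev w \<and> lev w < lev y))
     \<longleftrightarrow> (x,y) \<in> (if lvl p lev 1 = {} then lvl p lev 0 \<times> lvl p lev 2
            else lvl p lev 0 \<times> lvl p lev 1 \<union> lvl p lev 1 \<times> lvl p lev 2)" for x y
  proof (cases "lvl p lev 1 = {}")
    case True
    then have n1: "\<forall>w<p. lev w \<noteq> 1" unfolding lvl_def by auto
    have "(x < p \<and> y < p \<and> lev x < lev y \<and> \<not> (\<exists>w. w < p \<and> lev x < lev w \<and> lev w < lev y))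
       \<longleftrightarrow> (x < p \<and> y < p \<and> lev x = 0 \<and> lev y = 2)"
    proof
      assume h: "x < p \<and> y < p \<and> lev x < lev y \<and> \<not> (\<exists>w. w < p \<and> lev x < lev w \<and> lev w < lev y)"
      then have "lev x \<noteq> 1" "lev y \<noteq> 1" "lev y \<le> 2" using n1 le2 by auto
      then show "x < p \<and> y < p \<and> lev x = 0 \<and> lev y = 2" using h by linarith
    next
      assume h: "x < p \<and> y < p \<and> lev x = 0 \<and> lev y = 2"
      have "\<not> (w < p \<and> 0 < lev w \<and> lev w < 2)" for w using n1 by auto
      then show "x < p \<and> y < p \<and> lev x < lev y \<and> \<not> (\<exists>w. w < p \<and> lev x < lev w \<and> lev w < lev y)"
        using h by auto
    qed
    then show ?thesis using True unfolding lvl_def by auto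
  next
    case False
    then obtain w where w: "w < p" "lev w = 1" unfolding lvl_def by auto
    have "(x < p \<and> y < p \<and> lev x < lev y \<and> \<not> (\<exists>w. w < p \<and> lev x < lev w \<and> lev w < lev y))
       \<longleftrightarrow> (x < p \<and> y < p \<and> ((lev x = 0 \<and> lev y = 1) \<or> (lev x = 1 \<and> lev y = 2)))"
    proof
      assume h: "x < p \<and> y < p \<and> lev x < lev y \<and> \<not> (\<exists>w. w < p \<and> lev x < lev w \<and> lev w < lev y)"
      then have "\<not> (lev x < 1 \<and> 1 < lev y)" using w by (metis One_nat_def)
      moreover have "lev y \<le> 2" using h le2 by auto
      ultimately show "x < p \<and> y < p \<and> ((lev x = 0 \<and> lev y = 1) \<or> (lev x = 1 \<and> lev y = 2))" using h by linarith
    next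
      assume h: "x < p \<and> y < p \<and> ((lev x = 0 \<and> lev y = 1) \<or> (lev x = 1 \<and> lev y = 2))"
      then show "x < p \<and> y < p \<and> lev x < lev y \<and> \<not> (\<exists>w. w < p \<and> lev x < lev w \<and> lev w < lev y)"
        by auto
    qed
    then show ?thesis using False unfolding lvl_def by auto
  qed
  ultimately show ?thesis unfolding set_eq_iff split_paired_All by blast
qed

lemma lvl_fin: "finite (lvl p lev k)" unfolding lvl_def by auto

lemma WO_card:
  assumes le2: "\<forall>x<p. lev x \<le> 2"
  shows "card (hasse_arcs (WO p lev)) = arcsf (card (lvl p lev 0)) (card (lvl p lev 1)) (card (lvl p lev 2))"
proof (cases "lvl p lev 1 = {}")
  case True
  then show ?thesis using WO_hasse[OF le2] by (simp add: arcsf_def card_cartesian_product)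
next
  case False
  then have c: "card (lvl p lev 1) \<noteq> 0" using lvl_fin by auto
  have d: "(lvl p lev 0 \<times> lvl p lev 1) \<inter> (lvl p lev 1 \<times> lvl p lev 2) = {}" unfolding lvl_def by auto
  show ?thesis using WO_hasse[OF le2] False c card_Un_disjoint[OF _ _ d] lvl_fin
    by (simp add: arcsf_def card_cartesian_product)
qed

lemma WO_min:
  assumes "lvl p lev 0 \<noteq> {}"
  shows "minset p (WO p lev) = lvl p lev 0"
proof
  obtain z where z: "z < p" "lev z = 0" using assms unfolding lvl_def by auto
  show "minset p (WO p lev) \<subseteq> lvl p lev 0"
  proof
    fix x assume x: "x \<in> minset p (WO p lev)"
    then have "x < p" unfolding minset_def by simp
    have "lev x = 0"
    proof (rule ccontr)
      assume "lev x \<noteq> 0"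
      then have "(z,x) \<in> WO p lev" using z \<open>x < p\<close> unfolding WO_def by simp
      then have "z = x" using x unfolding minset_def by blast
      then show False using z \<open>lev x \<noteq> 0\<close> by simp
    qed
    then show "x \<in> lvl p lev 0" using \<open>x < p\<close> unfolding lvl_def by simp
  qed
  show "lvl p lev 0 \<subseteq> minset p (WO p lev)"
    unfolding lvl_def minset_def WO_def by auto
qed

lemma WO_max:
  assumes le2: "\<forall>x<p. lev x \<le> 2" and "lvl p lev 2 \<noteq> {}"
  shows "maxset p (WO p lev) = lvl p lev 2"
proof
  obtain z where z: "z < p" "lev z = 2" using assms unfolding lvl_def by auto
  show "maxset p (WO p lev) \<subseteq> lvl p lev 2"
  proof
    fix x assume x: "x \<in> maxset p (WO p lev)"
    then have "x < p" unfolding maxset_def by simp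
    have "lev x = 2"
    proof (rule ccontr)
      assume "lev x \<noteq> 2"
      then have "lev x < 2" using le2 \<open>x < p\<close> by (simp add: order_le_neq_trans)
      then have "(x,z) \<in> WO p lev" using z \<open>x < p\<close> unfolding WO_def by simp
      then have "z = x" using x unfolding maxset_def by blast
      then show False using z \<open>lev x \<noteq> 2\<close> by simp
    qed
    then show "x \<in> lvl p lev 2" using \<open>x < p\<close> unfolding lvl_def by simp
  qed
  show "lvl p lev 2 \<subseteq> maxset p (WO p lev)"
  proof
    fix x assume "x \<in> lvl p lev 2"
    then have x: "x < p" "lev x = 2" unfolding lvl_def by auto
    have "y = x" if "(x,y) \<in> WO p lev" for y
    proof -
      have "y < p" "x = y \<or> lev x < lev y" using that unfolding WO_def by auto
      then show ?thesis using le2 x by fastforce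
    qed
    then show "x \<in> maxset p (WO p lev)" using x unfolding maxset_def by blast
  qed
qed

lemma WO_iso:
  assumes c: "\<forall>k. card (lvl p l1 k) = card (lvl p l2 k)"
  shows "poset_iso p (WO p l1) (WO p l2)"
proof -
  have "\<exists>g. bij_betw g (lvl p l1 k) (lvl p l2 k)" for k
    using finite_same_card_bij[OF lvl_fin lvl_fin] c by blast
  then have "\<forall>k. \<exists>g. bij_betw g (lvl p l1 k) (lvl p l2 k)" by blast
  from choice[OF this] obtain g where g0: "\<forall>k. bij_betw (g k) (lvl p l1 k) (lvl p l2 k)" by blast
  have g: "bij_betw (g k) (lvl p l1 k) (lvl p l2 k)" for k using g0 by blast
  define f where "f x = g (l1 x) x" for x
  have fl: "f x < p \<and> l2 (f x) = l1 x" if "x < p" for x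
  proof -
    have "x \<in> lvl p l1 (l1 x)" using that unfolding lvl_def by simp
    then have "g (l1 x) x \<in> lvl p l2 (l1 x)" using bij_betwE[OF g[of "l1 x"]] by blast
    then show ?thesis unfolding f_def lvl_def by simp
  qed
  have inj: "inj_on f {..<p}"
  proof (rule inj_onI)
    fix x y assume xy: "x \<in> {..<p}" "y \<in> {..<p}" "f x = f y"
    then have e: "l1 x = l1 y" using fl by (metis lessThan_iff)
    then have "g (l1 x) x = g (l1 x) y" using xy f_def by simp
    moreover have "x \<in> lvl p l1 (l1 x)" "y \<in> lvl p l1 (l1 x)" using xy e unfolding lvl_def by auto
    ultimately show "x = y" using bij_betw_imp_inj_on[OF g[of "l1 x"]] inj_onD by metis
  qed
  have im: "f ` {..<p} \<subseteq> {..<p}" using fl by auto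
  have bij: "bij_betw f {..<p} {..<p}"
    unfolding bij_betw_def using inj endo_inj_surj[OF _ im inj] by simp
  show ?thesis unfolding poset_iso_def
  proof (intro exI conjI ballI)
    show "bij_betw f {..<p} {..<p}" by (rule bij)
    fix x y assume xy: "x \<in> {..<p}" "y \<in> {..<p}"
    have fx: "f x < p" "l2 (f x) = l1 x" and fy: "f y < p" "l2 (f y) = l1 y" using fl xy by auto
    have "x = y \<longleftrightarrow> f x = f y" using inj_onD[OF inj _ xy] by auto
    then show "((x, y) \<in> WO p l1) = ((f x, f y) \<in> WO p l2)"
      using xy fx fy unfolding WO_def by auto
  qed
qed


lemma notmin_cov:
  assumes po: "is_poset p R" and x: "x < p" "x \<notin> minset p R"
  shows "\<exists>w. (w,x) \<in> hasse_arcs R"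
proof -
  obtain y where "(y,x) \<in> R" "y \<noteq> x" using x unfolding minset_def by auto
  then show ?thesis using cover_down[OF po] by blast
qed

lemma notmax_cov:
  assumes po: "is_poset p R" and x: "x < p" "x \<notin> maxset p R"
  shows "\<exists>w. (x,w) \<in> hasse_arcs R"
proof -
  obtain y where "(x,y) \<in> R" "y \<noteq> x" using x unfolding maxset_def by auto
  then show ?thesis using cover_up[OF po] by blast
qed

lemma cov_notmin: "(w,x) \<in> hasse_arcs R \<Longrightarrow> x \<notin> minset p R"
  unfolding minset_def using hasse_R by blast
lemma cov_notmax: "(x,w) \<in> hasse_arcs R \<Longrightarrow> x \<notin> maxset p R"
  unfolding maxset_def using hasse_R by blast

lemma amax_pos: "p \<ge> 2 \<Longrightarrow> a_max p \<ge> 1"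
proof -
  assume "p \<ge> 2"
  then have "p^2 \<ge> 2^2" by (rule power_mono) auto
  then show ?thesis unfolding a_max_def by simp
qed

lemma classify:
  assumes po: "is_poset p R" and p2: "p \<ge> 2" and ca: "card (hasse_arcs R) = a_max p"
  shows "\<exists>lev. (\<forall>x<p. lev x \<le> 2) \<and> R = WO p lev \<and> lvl p lev 0 \<noteq> {} \<and> lvl p lev 2 \<noteq> {}"
proof -
  define A where "A = hasse_arcs R"
  define E where "E = edges R"
  have cE: "card E = 2 * a_max (card {..<p})" using card_edges[OF po] ca E_def by simp
  have "\<exists>P Q. P \<inter> Q = {} \<and> P \<union> Q = {..<p} \<and> E = P \<times> Q \<union> Q \<times> P"
  proof -
    have "\<forall>x. (x,x) \<notin> E" using edges_irrefl unfolding E_def by blast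
    moreover have "\<forall>x y z. (x,y) \<in> E \<longrightarrow> (y,z) \<in> E \<longrightarrow> (x,z) \<in> E \<longrightarrow> False"
      using edges_trifree[OF po] unfolding E_def by blast
    moreover have "E \<subseteq> {..<p} \<times> {..<p}" using edges_sub[OF po] unfolding E_def .
    moreover have "sym E" using edges_sym unfolding E_def .
    ultimately have "card E \<le> 2 * a_max (card {..<p}) \<and> (card E = 2 * a_max (card {..<p}) \<longrightarrow>
           (\<exists>P Q. P \<inter> Q = {} \<and> P \<union> Q = {..<p} \<and> E = P \<times> Q \<union> Q \<times> P))"
      using mantel[of "{..<p}" E] by blast
    then show ?thesis using cE by blast
  qed
  then obtain P Q where PQ: "P \<inter> Q = {}" "P \<union> Q = {..<p}" "E = P \<times> Q \<union> Q \<times> P" by blast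
  have AE: "A \<subseteq> E" unfolding A_def E_def edges_def by auto
  have adj: "(x,y) \<in> A \<or> (y,x) \<in> A" if "(x,y) \<in> E" for x y
    using that unfolding A_def E_def edges_def by auto
  define sp where "sp x y = (x \<in> P \<longleftrightarrow> y \<in> P)" for x y
  have Eiff: "(x,y) \<in> E \<longleftrightarrow> \<not> sp x y" if "x < p" "y < p" for x y
    using that PQ unfolding sp_def by auto
  have covsp: "(x,y) \<in> A \<Longrightarrow> \<not> sp x y" for x y
    using AE PQ unfolding sp_def by auto
  have Asub: "(x,y) \<in> A \<Longrightarrow> x < p \<and> y < p" for x y using hasse_sub[OF po] A_def by auto
  have AR: "(x,y) \<in> A \<Longrightarrow> (x,y) \<in> R \<and> x \<noteq> y" for x y using hasse_R A_def by auto
  have adjd: "(x,y) \<in> A \<or> (y,x) \<in> A" if "x < p" "y < p" "\<not> sp x y" for x y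
    using adj Eiff that by blast
  have nochain: False if "(a,b) \<in> A" "(b,c) \<in> A" "(c,d) \<in> A" for a b c d
  proof -
    have "\<not> sp a d" using covsp[OF that(1)] covsp[OF that(2)] covsp[OF that(3)] unfolding sp_def by blast
    then have ad: "(a,d) \<in> A \<or> (d,a) \<in> A" using adjd Asub that by blast
    have ab: "(a,b) \<in> R" "a \<noteq> b" and bc: "(b,c) \<in> R" "b \<noteq> c" and cd: "(c,d) \<in> R" "c \<noteq> d"
      using AR that by auto
    have bd: "(b,d) \<in> R" using po_trans[OF po bc(1) cd(1)] .
    have bd2: "b \<noteq> d" using po_antisym[OF po bc(1)] cd bd by blast
    have adR: "(a,d) \<in> R" using po_trans[OF po ab(1) bd] .
    show False using ad
    proof
      assume "(a,d) \<in> A"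
      then show False using hasse_notbetween[of a d R b] ab bd bd2 A_def by blast
    next
      assume "(d,a) \<in> A"
      then show False using AR po_antisym[OF po adR] by blast
    qed
  qed
  define mn where "mn = minset p R"
  define mx where "mx = maxset p R"
  have nmin: "\<exists>w. (w,x) \<in> A" if "x < p" "x \<notin> mn" for x
    using notmin_cov[OF po that(1)] that(2) unfolding A_def mn_def by blast
  have nmax: "\<exists>w. (x,w) \<in> A" if "x < p" "x \<notin> mx" for x
    using notmax_cov[OF po that(1)] that(2) unfolding A_def mx_def by blast
  have cmin: "(w,x) \<in> A \<Longrightarrow> x \<notin> mn" for w x using cov_notmin unfolding A_def mn_def by blast
  have cmax: "(x,w) \<in> A \<Longrightarrow> x \<notin> mx" for w x using cov_notmax unfolding A_def mx_def by blast
  define lev where "lev x = (if x \<in> mn then 0 else if x \<in> mx then 2 else (1::nat))" for x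
  have le2: "\<forall>x<p. lev x \<le> 2" unfolding lev_def by auto
  have key: "(x,y) \<in> R \<longleftrightarrow> x = y \<or> lev x < lev y" if xy: "x < p" "y < p" for x y
  proof
    assume r: "(x,y) \<in> R"
    show "x = y \<or> lev x < lev y"
    proof (cases "x = y")
      case False
      have xnmax: "x \<notin> mx" using r False unfolding mx_def maxset_def by auto
      have ynmin: "y \<notin> mn" using r False unfolding mn_def minset_def by auto
      show ?thesis
      proof (cases "x \<in> mn")
        case True
        then show ?thesis using ynmin unfolding lev_def by auto
      next
        case xn: False
        have "y \<in> mx"
        proof (rule ccontr)
          assume "y \<notin> mx"
          then obtain y1 where y1: "(y,y1) \<in> A" using nmax xy by blast
          obtain x0 where x0: "(x0,x) \<in> A" using nmin xy xn by blast
          obtain z where z: "(x,z) \<in> A" "(z,y) \<in> R" using cover_up[OF po r False] A_def by blast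
          have zy1: "(z,y1) \<in> R" using po_trans[OF po z(2)] AR[OF y1] by blast
          have "z \<noteq> y1" using po_antisym[OF po _ z(2)] AR[OF y1] by blast
          then obtain z' where "(z,z') \<in> A" using cover_up[OF po zy1] A_def by blast
          then show False using nochain[OF x0 z(1)] by blast
        qed
        then show ?thesis using xn xnmax ynmin unfolding lev_def by auto
      qed
    qed simp
  next
    assume h: "x = y \<or> lev x < lev y"
    show "(x,y) \<in> R"
    proof (cases "x = y")
      case True
      then show ?thesis using po_refl[OF po] xy by simp
    next
      case False
      then have l: "lev x < lev y" using h by simp
      show ?thesis
      proof (cases "x \<in> mn")
        case xm: True
        then have ym: "y \<notin> mn" using l unfolding lev_def by auto
        show ?thesis
        proof (cases "sp x y")
          case False
          then have "(x,y) \<in> A \<or> (y,x) \<in> A" using adjd xy by blast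
          then show ?thesis using cmin xm AR by blast
        next
          case True
          obtain u where u: "(u,y) \<in> A" using nmin xy ym by blast
          have "\<not> sp x u" using True covsp[OF u] unfolding sp_def by blast
          then have "(x,u) \<in> A \<or> (u,x) \<in> A" using adjd xy Asub[OF u] by blast
          then have "(x,u) \<in> A" using cmin xm by blast
          then show ?thesis using po_trans[OF po] AR u by blast
        qed
      next
        case xm: False
        then have xmx: "x \<notin> mx" and ym: "y \<in> mx" "y \<notin> mn" using l unfolding lev_def by (auto split: if_splits)
        show ?thesis
        proof (cases "sp x y")
          case False
          then have "(x,y) \<in> A \<or> (y,x) \<in> A" using adjd xy by blast
          then show ?thesis using cmax ym AR by blast
        next
          case True
          obtain u where u: "(x,u) \<in> A" using nmax xy xmx by blast
          have "\<not> sp u y" using True covsp[OF u] unfolding sp_def by blast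
          then have "(u,y) \<in> A \<or> (y,u) \<in> A" using adjd xy Asub[OF u] by blast
          then have "(u,y) \<in> A" using cmax ym by blast
          then show ?thesis using po_trans[OF po] AR u by blast
        qed
      qed
    qed
  qed
  have RWO: "R = WO p lev"
  proof
    show "R \<subseteq> WO p lev"
    proof
      fix z assume z: "z \<in> R"
      then obtain x y where "z = (x,y)" "x < p" "y < p" using po_sub[OF po] by auto
      then show "z \<in> WO p lev" using key z unfolding WO_def by auto
    qed
    show "WO p lev \<subseteq> R" using key unfolding WO_def by auto
  qed
  have "E \<noteq> {}"
  proof -
    have "card E \<noteq> 0" using cE amax_pos[OF p2] by simp
    then show ?thesis by auto
  qed
  then obtain a b where "(a,b) \<in> E" by auto
  then obtain x y where xy: "(x,y) \<in> A" using adj by blast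
  have L0: "lvl p lev 0 \<noteq> {}"
  proof (cases "x \<in> mn")
    case True
    then show ?thesis using Asub[OF xy] unfolding lvl_def lev_def by auto
  next
    case False
    then obtain w where w: "(w,x) \<in> A" using nmin Asub[OF xy] by blast
    have "w \<in> mn"
    proof (rule ccontr)
      assume "w \<notin> mn"
      then obtain u where "(u,w) \<in> A" using nmin Asub[OF w] by blast
      then show False using nochain w xy by blast
    qed
    then show ?thesis using Asub[OF w] unfolding lvl_def lev_def by auto
  qed
  have L2: "lvl p lev 2 \<noteq> {}"
  proof (cases "y \<in> mx")
    case True
    then show ?thesis using Asub[OF xy] cmin[OF xy] unfolding lvl_def lev_def by auto
  next
    case False
    then obtain w where w: "(y,w) \<in> A" using nmax Asub[OF xy] by blast
    have "w \<in> mx"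
    proof (rule ccontr)
      assume "w \<notin> mx"
      then obtain u where "(w,u) \<in> A" using nmax Asub[OF w] by blast
      then show False using nochain w xy by blast
    qed
    then show ?thesis using Asub[OF w] cmin[OF w] unfolding lvl_def lev_def by auto
  qed
  show ?thesis using le2 RWO L0 L2 by blast
qed


lemma quot_card:
  assumes "\<forall>R\<in>S. \<forall>R'\<in>S. rel R R' \<longleftrightarrow> \<phi> R = \<phi> R'"
  shows "card (S // {(R,R'). R \<in> S \<and> R' \<in> S \<and> rel R R'}) = card (\<phi> ` S)"
proof -
  let ?r = "{(R,R'). R \<in> S \<and> R' \<in> S \<and> rel R R'}"
  define F where "F t = {R \<in> S. \<phi> R = t}" for t
  have "S // ?r = F ` (\<phi> ` S)"
  proof -
    have "?r `` {x} = F (\<phi> x)" if "x \<in> S" for x using assms that unfolding F_def by auto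
    then have "S // ?r = (\<lambda>x. F (\<phi> x)) ` S" unfolding quotient_def by auto
    then show ?thesis by (simp add: image_image)
  qed
  moreover have "inj_on F (\<phi> ` S)"
  proof (rule inj_onI)
    fix s t assume "s \<in> \<phi> ` S" "t \<in> \<phi> ` S" "F s = F t"
    then obtain R where "R \<in> S" "\<phi> R = s" by auto
    then have "R \<in> F s" unfolding F_def by auto
    then show "s = t" using \<open>F s = F t\<close> unfolding F_def by auto
  qed
  ultimately show ?thesis by (simp add: card_image)
qed

definition phi :: "nat \<Rightarrow> (nat \<times> nat) set \<Rightarrow> nat \<times> nat" where
  "phi p R = (card (minset p R), card (maxset p R))"

lemma iso_inv:
  assumes R: "is_poset p R" and S: "is_poset p S" and iso: "poset_iso p R S"
  shows "phi p R = phi p S"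
proof -
  obtain f where bij: "bij_betw f {..<p} {..<p}" and hom: "\<forall>x\<in>{..<p}. \<forall>y\<in>{..<p}. (x, y) \<in> R \<longleftrightarrow> (f x, f y) \<in> S"
    using iso unfolding poset_iso_def by blast
  have inj: "inj_on f {..<p}" and surj: "f ` {..<p} = {..<p}" using bij unfolding bij_betw_def by auto
  have Rs: "(a,b) \<in> R \<Longrightarrow> a < p \<and> b < p" for a b using po_sub[OF R] by auto
  have Ss: "(a,b) \<in> S \<Longrightarrow> a < p \<and> b < p" for a b using po_sub[OF S] by auto
  have fin: "x < p \<Longrightarrow> f x < p" for x using surj by auto
  have pre: "y < p \<Longrightarrow> \<exists>y'. y' < p \<and> y = f y'" for y using surj by (metis imageE lessThan_iff)
  have finj: "x < p \<Longrightarrow> y < p \<Longrightarrow> f x = f y \<Longrightarrow> x = y" for x y using inj by (simp add: inj_on_def)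
  have mn: "f ` minset p R = minset p S"
  proof
    show "f ` minset p R \<subseteq> minset p S"
    proof
      fix z assume "z \<in> f ` minset p R"
      then obtain x where x: "x < p" "\<forall>y. (y,x) \<in> R \<longrightarrow> y = x" "z = f x" unfolding minset_def by auto
      have "y = f x" if yS: "(y, f x) \<in> S" for y
      proof -
        obtain y' where y': "y' < p" "y = f y'" using pre Ss yS by blast
        then have "(y', x) \<in> R" using hom yS x(1) by auto
        then show ?thesis using x(2) y' by auto
      qed
      then show "z \<in> minset p S" using x fin unfolding minset_def by auto
    qed
    show "minset p S \<subseteq> f ` minset p R"
    proof
      fix z assume "z \<in> minset p S"
      then have z: "z < p" "\<forall>y. (y,z) \<in> S \<longrightarrow> y = z" unfolding minset_def by auto
      obtain x where x: "x < p" "z = f x" using pre z by blast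
      have "y = x" if "(y,x) \<in> R" for y
        using that Rs hom x z finj by (metis lessThan_iff)
      then show "z \<in> f ` minset p R" using x unfolding minset_def by auto
    qed
  qed
  have mx: "f ` maxset p R = maxset p S"
  proof
    show "f ` maxset p R \<subseteq> maxset p S"
    proof
      fix z assume "z \<in> f ` maxset p R"
      then obtain x where x: "x < p" "\<forall>y. (x,y) \<in> R \<longrightarrow> y = x" "z = f x" unfolding maxset_def by auto
      have "y = f x" if yS: "(f x, y) \<in> S" for y
      proof -
        obtain y' where y': "y' < p" "y = f y'" using pre Ss yS by blast
        then have "(x, y') \<in> R" using hom yS x(1) by auto
        then show ?thesis using x(2) y' by auto
      qed
      then show "z \<in> maxset p S" using x fin unfolding maxset_def by auto
    qed
    show "maxset p S \<subseteq> f ` maxset p R"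
    proof
      fix z assume "z \<in> maxset p S"
      then have z: "z < p" "\<forall>y. (z,y) \<in> S \<longrightarrow> y = z" unfolding maxset_def by auto
      obtain x where x: "x < p" "z = f x" using pre z by blast
      have "y = x" if "(x,y) \<in> R" for y
        using that Rs hom x z finj by (metis lessThan_iff)
      then show "z \<in> f ` maxset p R" using x unfolding maxset_def by auto
    qed
  qed
  have "inj_on f (minset p R)" "inj_on f (maxset p R)"
    by (rule inj_on_subset[OF inj], force simp: minset_def maxset_def)+
  then show ?thesis unfolding phi_def using mn mx card_image by metis
qed

lemma lvl_sum:
  assumes le2: "\<forall>x<p. lev x \<le> 2"
  shows "card (lvl p lev 0) + card (lvl p lev 1) + card (lvl p lev 2) = p"
proof -
  have u: "{..<p} = (lvl p lev 0 \<union> lvl p lev 1) \<union> lvl p lev 2"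
  proof
    show "{..<p} \<subseteq> (lvl p lev 0 \<union> lvl p lev 1) \<union> lvl p lev 2"
    proof
      fix x assume "x \<in> {..<p}"
      then have "x < p" "lev x \<le> 2" using le2 by auto
      then show "x \<in> (lvl p lev 0 \<union> lvl p lev 1) \<union> lvl p lev 2" unfolding lvl_def by auto
    qed
  qed (auto simp: lvl_def)
  have d1: "lvl p lev 0 \<inter> lvl p lev 1 = {}" and d2: "(lvl p lev 0 \<union> lvl p lev 1) \<inter> lvl p lev 2 = {}"
    unfolding lvl_def by auto
  have "p = card ((lvl p lev 0 \<union> lvl p lev 1) \<union> lvl p lev 2)" using u by (metis card_lessThan)
  also have "\<dots> = card (lvl p lev 0) + card (lvl p lev 1) + card (lvl p lev 2)"
    using card_Un_disjoint[OF _ _ d2] card_Un_disjoint[OF _ _ d1] lvl_fin by simp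
  finally show ?thesis by simp
qed

lemma lvl_big: "\<forall>x<p. lev x \<le> 2 \<Longrightarrow> k > 2 \<Longrightarrow> lvl p lev k = {}"
  unfolding lvl_def by auto

definition Sset :: "nat \<Rightarrow> nat \<Rightarrow> (nat \<times> nat) set set" where
  "Sset p a = {R. is_poset p R \<and> card (hasse_arcs R) = a}"

lemma S_iso_iff:
  assumes p2: "p \<ge> 2" and R: "R \<in> Sset p (a_max p)" and R': "R' \<in> Sset p (a_max p)"
  shows "poset_iso p R R' \<longleftrightarrow> phi p R = phi p R'"
proof
  assume "poset_iso p R R'"
  then show "phi p R = phi p R'" using iso_inv R R' unfolding Sset_def by blast
next
  assume ph: "phi p R = phi p R'"
  obtain l1 where l1: "\<forall>x<p. l1 x \<le> 2" "R = WO p l1" "lvl p l1 0 \<noteq> {}" "lvl p l1 2 \<noteq> {}"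
    using classify[OF _ p2] R unfolding Sset_def by blast
  obtain l2 where l2: "\<forall>x<p. l2 x \<le> 2" "R' = WO p l2" "lvl p l2 0 \<noteq> {}" "lvl p l2 2 \<noteq> {}"
    using classify[OF _ p2] R' unfolding Sset_def by blast
  have c0: "card (lvl p l1 0) = card (lvl p l2 0)" and c2: "card (lvl p l1 2) = card (lvl p l2 2)"
    using ph WO_min[OF l1(3)] WO_min[OF l2(3)] WO_max[OF l1(1) l1(4)] WO_max[OF l2(1) l2(4)] l1(2) l2(2)
    unfolding phi_def by auto
  have c1: "card (lvl p l1 1) = card (lvl p l2 1)" using lvl_sum[OF l1(1)] lvl_sum[OF l2(1)] c0 c2 by linarith
  have "\<forall>k. card (lvl p l1 k) = card (lvl p l2 k)"
  proof
    fix k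
    show "card (lvl p l1 k) = card (lvl p l2 k)"
    proof (cases "k > 2")
      case True
      then show ?thesis using lvl_big[OF l1(1)] lvl_big[OF l2(1)] by simp
    next
      case False
      then have "k = 0 \<or> k = 1 \<or> k = 2" by auto
      then show ?thesis using c0 c1 c2 by auto
    qed
  qed
  then show "poset_iso p R R'" using WO_iso l1(2) l2(2) by simp
qed

definition T0 :: "nat \<Rightarrow> (nat \<times> nat) set" where
  "T0 p = {(c0,c2). 1 \<le> c0 \<and> 1 \<le> c2 \<and> c0 + c2 \<le> p \<and> arcsf c0 (p - c0 - c2) c2 = a_max p}"

lemma phi_image:
  assumes p2: "p \<ge> 2"
  shows "phi p ` Sset p (a_max p) = T0 p"
proof
  show "phi p ` Sset p (a_max p) \<subseteq> T0 p"
  proof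
    fix t assume "t \<in> phi p ` Sset p (a_max p)"
    then obtain R where R: "R \<in> Sset p (a_max p)" "t = phi p R" by auto
    obtain l where l: "\<forall>x<p. l x \<le> 2" "R = WO p l" "lvl p l 0 \<noteq> {}" "lvl p l 2 \<noteq> {}"
      using classify[OF _ p2] R unfolding Sset_def by blast
    have t: "t = (card (lvl p l 0), card (lvl p l 2))"
      using R(2) l WO_min[OF l(3)] WO_max[OF l(1) l(4)] unfolding phi_def by simp
    have s: "card (lvl p l 0) + card (lvl p l 1) + card (lvl p l 2) = p" using lvl_sum[OF l(1)] .
    have "arcsf (card (lvl p l 0)) (card (lvl p l 1)) (card (lvl p l 2)) = a_max p"
      using WO_card[OF l(1)] R l(2) unfolding Sset_def by simp
    moreover have "card (lvl p l 0) \<ge> 1" "card (lvl p l 2) \<ge> 1" using l(3,4) lvl_fin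
      by (simp_all add: Suc_leI card_gt_0_iff)
    moreover have "p - card (lvl p l 0) - card (lvl p l 2) = card (lvl p l 1)" using s by linarith
    ultimately show "t \<in> T0 p" unfolding T0_def using t s by simp
  qed
  show "T0 p \<subseteq> phi p ` Sset p (a_max p)"
  proof
    fix t assume "t \<in> T0 p"
    then obtain c0 c2 where t: "t = (c0,c2)" "1 \<le> c0" "1 \<le> c2" "c0 + c2 \<le> p" "arcsf c0 (p - c0 - c2) c2 = a_max p"
      unfolding T0_def by auto
    define l where "l x = (if x < c0 then 0 else if x < p - c2 then 1 else (2::nat))" for x
    have le2: "\<forall>x<p. l x \<le> 2" unfolding l_def by auto
    have L0: "lvl p l 0 = {..<c0}" using t unfolding lvl_def l_def by auto
    have L1: "lvl p l 1 = {c0..<p - c2}" using t unfolding lvl_def l_def by auto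
    have L2: "lvl p l 2 = {p - c2..<p}" using t unfolding lvl_def l_def by auto
    have cs: "card (lvl p l 0) = c0" "card (lvl p l 1) = p - c0 - c2" "card (lvl p l 2) = c2"
      using L0 L1 L2 t by auto
    have ne: "lvl p l 0 \<noteq> {}" "lvl p l 2 \<noteq> {}" using cs t by auto
    have "WO p l \<in> Sset p (a_max p)" unfolding Sset_def using WO_poset WO_card[OF le2] cs t by simp
    moreover have "phi p (WO p l) = t" unfolding phi_def using WO_min[OF ne(1)] WO_max[OF le2 ne(2)] cs t by simp
    ultimately show "t \<in> phi p ` Sset p (a_max p)" by force
  qed
qed


lemma amax_even: "a_max (2*h) = h*h"
  unfolding a_max_def by (simp add: power2_eq_square)
lemma amax_odd: "a_max (2*h+1) = h*h + h"
proof -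
  have "(2*h+1)^2 = 4*(h*h+h) + 1" by (simp add: power2_eq_square algebra_simps)
  then show ?thesis unfolding a_max_def by simp
qed

lemma amax_eq:
  assumes kp: "k \<le> p"
  shows "k * (p - k) = a_max p \<longleftrightarrow> k = p div 2 \<or> k = p - p div 2"
proof (cases "even p")
  case True
  then obtain h where p: "p = 2*h" by blast
  have "k * (p - k) = a_max p \<longleftrightarrow> int k * (2 * int h - int k) = int h * int h"
  proof -
    have "int (k * (p - k)) = int k * (2 * int h - int k)" using kp p by (simp add: of_nat_diff)
    moreover have "int (a_max p) = int h * int h" using amax_even p by simp
    ultimately show ?thesis by (metis of_nat_eq_iff)
  qed
  also have "\<dots> \<longleftrightarrow> (int k - int h)^2 = 0"
  proof -
    have "(int k - int h)^2 = int h * int h - int k * (2 * int h - int k)" by algebra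
    then show ?thesis by linarith
  qed
  also have "\<dots> \<longleftrightarrow> k = h" by simp
  finally show ?thesis using p by auto
next
  case False
  then obtain h where p: "p = 2*h+1" using oddE by blast
  have "k * (p - k) = a_max p \<longleftrightarrow> int k * (2 * int h + 1 - int k) = int h * int h + int h"
  proof -
    have "int (k * (p - k)) = int k * (2 * int h + 1 - int k)" using kp p by (simp add: of_nat_diff)
    moreover have "int (a_max p) = int h * int h + int h" using amax_odd p by simp
    ultimately show ?thesis by (metis of_nat_eq_iff)
  qed
  also have "\<dots> \<longleftrightarrow> (int k - int h) * (int k - int h - 1) = 0"
  proof -
    have "(int k - int h) * (int k - int h - 1) = int h * int h + int h - int k * (2 * int h + 1 - int k)" by algebra
    then show ?thesis by linarith
  qed
  also have "\<dots> \<longleftrightarrow> k = h \<or> k = h + 1" by auto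
  finally show ?thesis using p by auto
qed

definition Fs :: "nat \<Rightarrow> (nat \<times> nat) set" where
  "Fs s = {(c0,c2). 1 \<le> c0 \<and> 1 \<le> c2 \<and> c0 + c2 = s}"

lemma card_Fs: "card (Fs s) = s - 1"
proof -
  have "Fs s = (\<lambda>c. (c, s - c)) ` {1..<s}" unfolding Fs_def by (auto simp: image_iff)
  moreover have "inj_on (\<lambda>c. (c, s - c)) {1..<s}" by (auto simp: inj_on_def)
  ultimately show ?thesis by (simp add: card_image)
qed

lemma fin_Fs: "finite (Fs s)"
proof -
  have "Fs s \<subseteq> {..s} \<times> {..s}" unfolding Fs_def by auto
  then show ?thesis using finite_subset by blast
qed

lemma T0_mem:
  assumes p2: "p \<ge> 2"
  shows "(c0,c2) \<in> T0 p \<longleftrightarrow> 1 \<le> c0 \<and> 1 \<le> c2 \<and>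
     ((c0 + c2 = p \<and> (c0 = p div 2 \<or> c0 = p - p div 2)) \<or> c0 + c2 = p div 2 \<or> c0 + c2 = p - p div 2)"
proof -
  let ?h = "p div 2"
  have h1: "?h \<ge> 1" "?h < p" "p - ?h < p" using p2 by auto
  show ?thesis
  proof (cases "c0 + c2 \<le> p")
    case False
    then show ?thesis unfolding T0_def using h1 by auto
  next
    case le: True
    show ?thesis
    proof (cases "c0 + c2 = p")
      case True
      then have c2e: "c2 = p - c0" by simp
      then have "arcsf c0 (p - c0 - c2) c2 = c0 * (p - c0)" unfolding arcsf_def by simp
      then show ?thesis unfolding T0_def using True amax_eq[of c0 p] h1 by auto
    next
      case False
      define c1 where "c1 = p - c0 - c2"
      have c1: "c1 \<noteq> 0" "c1 \<le> p" "c0 + c2 = p - c1" using le False unfolding c1_def by auto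
      have "arcsf c0 (p - c0 - c2) c2 = c1 * (p - c1)"
      proof -
        have "c0 * c1 + c1 * c2 = c1 * (c0 + c2)" by (simp add: algebra_simps)
        then show ?thesis unfolding arcsf_def c1_def[symmetric] using c1 by simp
      qed
      then have "(c0,c2) \<in> T0 p \<longleftrightarrow> 1 \<le> c0 \<and> 1 \<le> c2 \<and> (c1 = ?h \<or> c1 = p - ?h)"
        unfolding T0_def using le amax_eq[OF c1(2)] by auto
      moreover have "(c1 = ?h \<or> c1 = p - ?h) \<longleftrightarrow> (c0 + c2 = ?h \<or> c0 + c2 = p - ?h)"
        using c1 h1 by auto
      ultimately show ?thesis using False by auto
    qed
  qed
qed

lemma card_T0:
  assumes p2: "p \<ge> 2"
  shows "card (T0 p) = (if odd p then p else p div 2)"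
proof (cases "even p")
  case True
  then obtain h where p: "p = 2*h" by blast
  have h1: "h \<ge> 1" using p p2 by auto
  have "T0 p = {(h,h)} \<union> Fs h"
  proof (rule set_eqI)
    fix z :: "nat \<times> nat"
    obtain c0 c2 where z: "z = (c0,c2)" by (cases z)
    show "z \<in> T0 p \<longleftrightarrow> z \<in> {(h,h)} \<union> Fs h"
      unfolding z T0_mem[OF p2] Fs_def using p h1 by auto
  qed
  moreover have "(h,h) \<notin> Fs h" unfolding Fs_def using h1 by auto
  ultimately have "card (T0 p) = 1 + (h - 1)" using card_Fs fin_Fs by simp
  then show ?thesis using True p h1 by simp
next
  case False
  then obtain h where p: "p = 2*h+1" using oddE by blast
  have h1: "h \<ge> 1" using p p2 by auto
  have "T0 p = {(h,h+1),(h+1,h)} \<union> (Fs h \<union> Fs (h+1))"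
  proof (rule set_eqI)
    fix z :: "nat \<times> nat"
    obtain c0 c2 where z: "z = (c0,c2)" by (cases z)
    show "z \<in> T0 p \<longleftrightarrow> z \<in> {(h,h+1),(h+1,h)} \<union> (Fs h \<union> Fs (h+1))"
      unfolding z T0_mem[OF p2] Fs_def using p h1 by auto
  qed
  moreover have "{(h,h+1),(h+1,h)} \<inter> (Fs h \<union> Fs (h+1)) = {}" unfolding Fs_def using h1 by auto
  moreover have "Fs h \<inter> Fs (h+1) = {}" unfolding Fs_def by auto
  ultimately have "card (T0 p) = 2 + ((h - 1) + h)"
    using card_Fs fin_Fs card_Un_disjoint by (simp add: card_Un_disjoint)
  then show ?thesis using False p h1 by simp
qed


lemma arcs_le:
  assumes po: "is_poset p R"
  shows "card (hasse_arcs R) \<le> a_max p"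
proof -
  define E where "E = edges R"
  have "\<forall>x. (x,x) \<notin> E" using edges_irrefl unfolding E_def by blast
  moreover have "\<forall>x y z. (x,y) \<in> E \<longrightarrow> (y,z) \<in> E \<longrightarrow> (x,z) \<in> E \<longrightarrow> False"
    using edges_trifree[OF po] unfolding E_def by blast
  moreover have "E \<subseteq> {..<p} \<times> {..<p}" using edges_sub[OF po] unfolding E_def .
  moreover have "sym E" using edges_sym unfolding E_def .
  ultimately have "card E \<le> 2 * a_max (card {..<p})"
    using mantel[of "{..<p}" E] by blast
  then show ?thesis using card_edges[OF po] E_def by simp
qed

lemma nic_empty: "num_iso_classes p {} = 0"
  unfolding num_iso_classes_def by (simp add: quotient_def)

lemma p1_case: "H 1 0 = 1"
proof -
  have "{R. is_poset 1 R \<and> card (hasse_arcs R) = 0} = {{(0,0)}}"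
  proof (rule set_eqI)
    fix R :: "(nat \<times> nat) set"
    show "R \<in> {R. is_poset 1 R \<and> card (hasse_arcs R) = 0} \<longleftrightarrow> R \<in> {{(0,0)}}"
    proof
      assume "R \<in> {R. is_poset 1 R \<and> card (hasse_arcs R) = 0}"
      then have "is_poset 1 R" by simp
      then have "R \<subseteq> {(0,0)}" "(0,0) \<in> R" using po_sub po_refl by fastforce+
      then show "R \<in> {{(0,0)}}" by auto
    next
      assume "R \<in> {{(0,0)}}"
      then have R: "R = {(0,0)}" by simp
      have "is_poset 1 R" unfolding R is_poset_def by auto
      moreover have "hasse_arcs R = {}" unfolding R hasse_arcs_def by auto
      ultimately show "R \<in> {R. is_poset 1 R \<and> card (hasse_arcs R) = 0}" by simp
    qed
  qed
  then show ?thesis unfolding H_def num_iso_classes_def by (simp add: quotient_def)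
qed

theorem lemma2:
  fixes p a :: nat
  assumes "p \<ge> 1"
  shows "(a < p - 1 \<longrightarrow> Hc p a = 0)
    \<and> (a > a_max p \<longrightarrow> H p a = 0)
    \<and> H p (a_max p) = (if odd p then p else p div 2)
    \<and> (a_max (p - 1) < a \<and> a \<le> a_max p \<longrightarrow> H p a = Hc p a)"
proof (intro conjI impI)
  assume a: "a < p - 1"
  have e: "{R. is_poset p R \<and> card (hasse_arcs R) = a \<and> hasse_connected p R} = {}"
    using conn_arcs assms a by fastforce
  show "Hc p a = 0" unfolding Hc_def e by (rule nic_empty)
next
  assume a: "a > a_max p"
  have e: "{R. is_poset p R \<and> card (hasse_arcs R) = a} = {}"
    using arcs_le a by fastforce
  show "H p a = 0" unfolding H_def e by (rule nic_empty)
next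
  show "H p (a_max p) = (if odd p then p else p div 2)"
  proof (cases "p = 1")
    case True
    then show ?thesis using p1_case by (simp add: a_max_def)
  next
    case False
    then have p2: "p \<ge> 2" using assms by simp
    have "H p (a_max p) = card (phi p ` Sset p (a_max p))"
      unfolding H_def num_iso_classes_def Sset_def[symmetric]
      using quot_card[of "Sset p (a_max p)" "poset_iso p" "phi p"] S_iso_iff[OF p2] by blast
    also have "\<dots> = card (T0 p)" using phi_image[OF p2] by simp
    finally show ?thesis using card_T0[OF p2] by simp
  qed
next
  assume a: "a_max (p - 1) < a \<and> a \<le> a_max p"
  have "{R. is_poset p R \<and> card (hasse_arcs R) = a} = {R. is_poset p R \<and> card (hasse_arcs R) = a \<and> hasse_connected p R}"
    using disc_bound a by fastforce
  then show "H p a = Hc p a" unfolding H_def Hc_def by simp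
qed

end
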